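(* Let $\gamma\geq0$, $G=(V,E,\omega)\in\mathcal C_\gamma$, $u_0,v_0\in\mathcal V$, and let $u,v:[0,\infty)\to\mathcal V$ be the solutions (continuously differentiable in $t$) of $\frac{du}{dt}=-Lu$, $u(0)=u_0$ and $\frac{dv}{dt}=-Lv$, $v(0)=v_0$. If $(u_0)_i\leq(v_0)_i$ for all $i\in V$, then $u_i(t)\leq v_i(t)$ for all $t\geq0$ and all $i\in V$.
   Context: $\mathcal{G}$ is the set of finite, simple, connected, undirected, edge-weighted graphs $G=(V,E,\omega)$ with $V=\{1,\dots,n\}$, $n\geq2$, weights $\omega_{ij}=\omega_{ji}>0$ on edges, $0$ otherwise. $d_i=\sum_j\omega_{ij}$. $\mathcal V$: functions $V\to\mathbb R$. Fixed $r\in[0,1]$: $(\Delta u)_i=d_i^{-r}\sum_j\omega_{ij}(u_i-u_j)$, $\mathcal M(u)=\sum_id_i^ru_i$, $\mathrm{vol}(V)=\sum_id_i^r$, $\mathcal A(u)=\frac{\mathcal M(u)}{\mathrm{vol}(V)}\chi_V$. For $u\in\mathcal V$ let $\varphi$ be the unique solution of $\Delta\varphi=u-\mathcal A(u)$, $\mathcal M(\varphi)=0$, and $Lu:=\Delta u+\gamma\varphi$ (a linear operator on $\mathcal V$). For a proper subset $S\subsetneq V$, the equilibrium measure $\nu^S$ is the unique $\nu\in\mathcal V$ with $(\Delta\nu)_i=1$ on $S$ and $\nu_i=0$ off $S$. $f^j:=\nu^{V\setminus\{j\}}-\mathcal A(\nu^{V\setminus\{j\}})$. $\mathcal C^0=\{G\in\mathcal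 G:\forall j\ \forall i\neq j:\ \omega_{ij}>0\text{ or }f^j_i\geq0\}$; for $\gamma>0$, $\mathcal C_\gamma=\{G\in\mathcal C^0:\forall j\ \forall i\neq j:\ \omega_{ij}=0\text{ or }d_i^{-r}\omega_{ij}+\gamma\frac{d_j^r}{\mathrm{vol}(V)}f^j_i>0\}$; $\mathcal C_0:=\mathcal G$. *)

theory Defs
  imports "HOL-Analysis.Analysis"
begin

text \<open>A graph is given by n and a weight function w on V = {1..n}.
  Functions on V are represented as nat => real; only values on {1..n} matter.\<close>

definition Vset :: "nat \<Rightarrow> nat set" where
  "Vset n = {1..n}"

definition is_graph :: "nat \<Rightarrow> (nat \<Rightarrow> nat \<Rightarrow> real) \<Rightarrow> bool" where
  "is_graph n w \<longleftrightarrow> n \<ge> 2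
     \<and> (\<forall>i j. w i j = w j i)
     \<and> (\<forall>i j. w i j \<ge> 0)
     \<and> (\<forall>i. w i i = 0)
     \<and> (\<forall>i j. (i \<notin> Vset n \<or> j \<notin> Vset n) \<longrightarrow> w i j = 0)
     \<and> (\<forall>i\<in>Vset n. \<forall>j\<in>Vset n. (\<lambda>a b. w a b > 0)\<^sup>*\<^sup>* i j)"

definition deg :: "nat \<Rightarrow> (nat \<Rightarrow> nat \<Rightarrow> real) \<Rightarrow> nat \<Rightarrow> real" where
  "deg n w i = (\<Sum>j\<in>Vset n. w i j)"

definition lap :: "real \<Rightarrow> nat \<Rightarrow> (nat \<Rightarrow> nat \<Rightarrow> real) \<Rightarrow> (nat \<Rightarrow> real) \<Rightarrow> nat \<Rightarrow> real" where
  "lap r n w u i = deg n w i powr (- r) * (\<Sum>j\<in>Vset n. w i j * (u i - u j))"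

definition mass :: "real \<Rightarrow> nat \<Rightarrow> (nat \<Rightarrow> nat \<Rightarrow> real) \<Rightarrow> (nat \<Rightarrow> real) \<Rightarrow> real" where
  "mass r n w u = (\<Sum>i\<in>Vset n. deg n w i powr r * u i)"

definition vol :: "real \<Rightarrow> nat \<Rightarrow> (nat \<Rightarrow> nat \<Rightarrow> real) \<Rightarrow> real" where
  "vol r n w = (\<Sum>i\<in>Vset n. deg n w i powr r)"

definition avg :: "real \<Rightarrow> nat \<Rightarrow> (nat \<Rightarrow> nat \<Rightarrow> real) \<Rightarrow> (nat \<Rightarrow> real) \<Rightarrow> nat \<Rightarrow> real" where
  "avg r n w u i = (if i \<in> Vset n then mass r n w u / vol r n w else 0)"

text \<open>Functions supported on V (canonical representatives of elements of the space of functions on V).\<close>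
definition onV :: "nat \<Rightarrow> (nat \<Rightarrow> real) \<Rightarrow> bool" where
  "onV n u \<longleftrightarrow> (\<forall>i. i \<notin> Vset n \<longrightarrow> u i = 0)"

definition phi :: "real \<Rightarrow> nat \<Rightarrow> (nat \<Rightarrow> nat \<Rightarrow> real) \<Rightarrow> (nat \<Rightarrow> real) \<Rightarrow> nat \<Rightarrow> real" where
  "phi r n w u = (THE p. onV n p \<and> (\<forall>i\<in>Vset n. lap r n w p i = u i - avg r n w u i)
                        \<and> mass r n w p = 0)"

definition Lop :: "real \<Rightarrow> real \<Rightarrow> nat \<Rightarrow> (nat \<Rightarrow> nat \<Rightarrow> real) \<Rightarrow> (nat \<Rightarrow> real) \<Rightarrow> nat \<Rightarrow> real" where
  "Lop r \<gamma> n w u i = lap r n w u i + \<gamma> * phi r n w u i"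

definition eqmeas :: "real \<Rightarrow> nat \<Rightarrow> (nat \<Rightarrow> nat \<Rightarrow> real) \<Rightarrow> nat set \<Rightarrow> nat \<Rightarrow> real" where
  "eqmeas r n w S = (THE \<nu>. onV n \<nu> \<and> (\<forall>i\<in>S. lap r n w \<nu> i = 1)
                          \<and> (\<forall>i\<in>Vset n - S. \<nu> i = 0))"

definition fj :: "real \<Rightarrow> nat \<Rightarrow> (nat \<Rightarrow> nat \<Rightarrow> real) \<Rightarrow> nat \<Rightarrow> nat \<Rightarrow> real" where
  "fj r n w j i = eqmeas r n w (Vset n - {j}) i - avg r n w (eqmeas r n w (Vset n - {j})) i"

definition C0 :: "real \<Rightarrow> nat \<Rightarrow> (nat \<Rightarrow> nat \<Rightarrow> real) \<Rightarrow> bool" where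
  "C0 r n w \<longleftrightarrow> is_graph n w \<and>
     (\<forall>j\<in>Vset n. \<forall>i\<in>Vset n. i \<noteq> j \<longrightarrow> w i j > 0 \<or> fj r n w j i \<ge> 0)"

text \<open>C_gamma for gamma > 0, and C_0 = all graphs.\<close>
definition Cgamma :: "real \<Rightarrow> real \<Rightarrow> nat \<Rightarrow> (nat \<Rightarrow> nat \<Rightarrow> real) \<Rightarrow> bool" where
  "Cgamma r \<gamma> n w \<longleftrightarrow>
     (if \<gamma> = 0 then is_graph n w
      else C0 r n w \<and>
        (\<forall>j\<in>Vset n. \<forall>i\<in>Vset n. i \<noteq> j \<longrightarrow> w i j = 0 \<or>
           deg n w i powr (- r) * w i j + \<gamma> * deg n w j powr r / vol r n w * fj r n w j i > 0))"

end

theory Submission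
  imports Defs "Jordan_Normal_Form.Determinant"
begin


lemma sum_V_shift: "(\<Sum>j\<in>{1..n}. f j) = (\<Sum>j=0..<n. f (Suc j))"
  using sum.atLeast1_atMost_eq[of f n] by (simp add: atLeast0LessThan)

lemma inj_imp_solvable:
  fixes K :: "nat \<Rightarrow> nat \<Rightarrow> real" and b :: "nat \<Rightarrow> real"
  assumes inj: "\<And>x. (\<And>i. i \<in> {1..n} \<Longrightarrow> (\<Sum>j\<in>{1..n}. K i j * x j) = 0) \<Longrightarrow> (\<And>i. i\<in>{1..n} \<Longrightarrow> x i = 0)"
  shows "\<exists>x. (\<forall>i. i \<notin> {1..n} \<longrightarrow> x i = 0) \<and> (\<forall>i\<in>{1..n}. (\<Sum>j\<in>{1..n}. K i j * x j) = b i)"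
proof -
  define A where "A = mat n n (\<lambda>(i,j). K (Suc i) (Suc j))"
  have A: "A \<in> carrier_mat n n" unfolding A_def by simp
  have Av: "(A *\<^sub>v v) $ i = (\<Sum>j\<in>{1..n}. K (Suc i) j * (if j \<in> {1..n} then v $ (j - 1) else 0))"
    if "i < n" "v \<in> carrier_vec n" for v i
    using that unfolding A_def sum_V_shift
    by (auto simp: index_mult_mat_vec scalar_prod_def Matrix.row_def intro!: sum.cong)
  have "Determinant.det A \<noteq> 0"
  proof
    assume "Determinant.det A = 0"
    then obtain v where v: "v \<in> carrier_vec n" "v \<noteq> 0\<^sub>v n" "A *\<^sub>v v = 0\<^sub>v n"
      using det_0_iff_vec_prod_zero[OF A] by auto
    define x where "x j = (if j \<in> {1..n} then v $ (j - 1) else 0)" for j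
    have "x i = 0" if "i \<in> {1..n}" for i
    proof (rule inj)
      fix k assume k: "k \<in> {1..n}"
      have "(A *\<^sub>v v) $ (k - 1) = 0" using v k by auto
      then show "(\<Sum>j\<in>{1..n}. K k j * x j) = 0"
        using Av[of "k - 1" v] v k unfolding x_def by auto
    qed (use that in auto)
    have "v = 0\<^sub>v n"
    proof (rule eq_vecI)
      fix i assume "i < dim_vec (0\<^sub>v n)"
      then have i: "i < n" by simp
      then have "Suc i \<in> {1..n}" by auto
      from \<open>\<And>i. i \<in> {1..n} \<Longrightarrow> x i = 0\<close>[OF this] i
      show "v $ i = 0\<^sub>v n $ i" unfolding x_def by simp
    qed (use v(1) in simp)
    with v show False by simp
  qed
  from det_non_zero_imp_unit[OF A this, of "()"]
  obtain B where B: "B \<in> carrier_mat n n" "A * B = 1\<^sub>m n"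
    unfolding Units_def ring_mat_def by auto
  define bv where "bv = vec n (\<lambda>i. b (Suc i))"
  define y where "y = B *\<^sub>v bv"
  have y: "y \<in> carrier_vec n" unfolding y_def bv_def using B by auto
  have Ay: "A *\<^sub>v y = bv"
    unfolding y_def using B A
    by (metis assoc_mult_mat_vec bv_def one_mult_mat_vec vec_carrier)
  define x where "x j = (if j \<in> {1..n} then y $ (j - 1) else 0)" for j
  show ?thesis
  proof (intro exI[of _ x] conjI allI impI ballI)
    fix i assume i: "i \<in> {1..n}"
    have "(A *\<^sub>v y) $ (i - 1) = b i" using Ay i unfolding bv_def by auto
    then show "(\<Sum>j\<in>{1..n}. K i j * x j) = b i"
      using Av[of "i - 1" y] y i unfolding x_def by auto
  qed (auto simp: x_def)
qed



lemma w_out: "is_graph n w \<Longrightarrow> w i j \<noteq> 0 \<Longrightarrow> i \<in> Vset n \<and> j \<in> Vset n"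
  unfolding is_graph_def by blast

lemma w_nonneg: "is_graph n w \<Longrightarrow> w i j \<ge> 0"
  unfolding is_graph_def by blast

lemma w_sym: "is_graph n w \<Longrightarrow> w i j = w j i"
  unfolding is_graph_def by blast

lemma finV[simp]: "finite (Vset n)" unfolding Vset_def by simp

lemma deg_pos:
  assumes G: "is_graph n w" and i: "i \<in> Vset n"
  shows "deg n w i > 0"
proof -
  have n2: "n \<ge> 2" using G unfolding is_graph_def by auto
  define j where "j = (if i = 1 then 2 else 1::nat)"
  have j: "j \<in> Vset n" "j \<noteq> i" using n2 i unfolding j_def Vset_def by auto
  have "(\<lambda>a b. w a b > 0)\<^sup>*\<^sup>* i j" using G i j unfolding is_graph_def by blast
  then obtain k where k: "w i k > 0"
    using j(2) by (cases rule: converse_rtranclpE) auto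
  then have kV: "k \<in> Vset n" using w_out[OF G, of i k] by auto
  have "w i k \<le> deg n w i" unfolding deg_def
    by (rule member_le_sum) (use kV w_nonneg[OF G] in auto)
  with k show ?thesis by simp
qed

lemma vol_pos:
  assumes G: "is_graph n w"
  shows "vol r n w > 0"
proof -
  have n2: "n \<ge> 2" using G unfolding is_graph_def by auto
  have "1 \<in> Vset n" using n2 unfolding Vset_def by auto
  have "deg n w 1 powr r \<le> vol r n w" unfolding vol_def
    by (rule member_le_sum) (use \<open>1 \<in> Vset n\<close> in auto)
  moreover have "deg n w 1 powr r > 0" using deg_pos[OF G \<open>1 \<in> Vset n\<close>] by simp
  ultimately show ?thesis by linarith
qed

lemma powr_cancel: "(d::real) > 0 \<Longrightarrow> d powr r * d powr (- r) = 1"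
  by (simp add: powr_minus)

lemma lap_alt:
  "lap r n w p i = deg n w i powr (- r) * (deg n w i * p i - (\<Sum>j\<in>Vset n. w i j * p j))"
  unfolding lap_def deg_def
  by (simp add: algebra_simps sum_subtractf sum_distrib_left sum_distrib_right)

lemma sum_lap:
  assumes G: "is_graph n w"
  shows "(\<Sum>i\<in>Vset n. deg n w i powr r * lap r n w p i) = 0"
proof -
  have "(\<Sum>i\<in>Vset n. deg n w i powr r * lap r n w p i)
      = (\<Sum>i\<in>Vset n. \<Sum>j\<in>Vset n. w i j * (p i - p j))"
    unfolding lap_def
    by (rule sum.cong) (auto simp: mult.assoc[symmetric] powr_cancel deg_pos[OF G])
  also have "\<dots> = (\<Sum>i\<in>Vset n. \<Sum>j\<in>Vset n. w i j * p i) - (\<Sum>i\<in>Vset n. \<Sum>j\<in>Vset n. w i j * p j)"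
    by (simp add: algebra_simps sum_subtractf)
  also have "(\<Sum>i\<in>Vset n. \<Sum>j\<in>Vset n. w i j * p j) = (\<Sum>j\<in>Vset n. \<Sum>i\<in>Vset n. w i j * p j)"
    by (rule sum.swap)
  also have "\<dots> = (\<Sum>i\<in>Vset n. \<Sum>j\<in>Vset n. w i j * p i)"
    using w_sym[OF G] by simp
  finally show ?thesis by simp
qed

lemma harm_const:
  assumes G: "is_graph n w" and i0: "i0 \<in> Vset n"
    and mx: "\<And>j. j \<in> Vset n \<Longrightarrow> p j \<le> p i0"
    and h: "\<And>i. i \<in> Vset n \<Longrightarrow> p i = p i0 \<Longrightarrow> (\<Sum>j\<in>Vset n. w i j * (p i - p j)) \<le> 0"
    and j: "j \<in> Vset n"
  shows "p j = p i0"
proof -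
  have "(\<lambda>a b. w a b > 0)\<^sup>*\<^sup>* i0 j" using G i0 j unfolding is_graph_def by blast
  then show ?thesis
  proof (induction rule: rtranclp_induct)
    case base then show ?case by simp
  next
    case (step y z)
    have yz: "y \<in> Vset n" "z \<in> Vset n" using w_out[OF G, of y z] step(2) by auto
    have nn: "\<forall>k\<in>Vset n. 0 \<le> w y k * (p y - p k)"
      using mx step(3) w_nonneg[OF G] by (auto intro!: mult_nonneg_nonneg)
    have "(\<Sum>k\<in>Vset n. w y k * (p y - p k)) = 0"
    proof -
      have "(\<Sum>k\<in>Vset n. w y k * (p y - p k)) \<ge> 0" by (rule sum_nonneg) (use nn in auto)
      then show ?thesis using h[OF yz(1) step(3)] by linarith
    qed
    then have "w y z * (p y - p z) = 0"
      using sum_nonneg_eq_0_iff[of "Vset n" "\<lambda>k. w y k * (p y - p k)"] nn yz by auto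
    then show ?case using step(2,3) by auto
  qed
qed



definition lapK :: "real \<Rightarrow> nat \<Rightarrow> (nat \<Rightarrow> nat \<Rightarrow> real) \<Rightarrow> nat \<Rightarrow> nat \<Rightarrow> real" where
  "lapK r n w i j = deg n w i powr (- r) * ((if i = j then deg n w i else 0) - w i j)"

lemma lap_mat:
  assumes i: "i \<in> Vset n"
  shows "lap r n w p i = (\<Sum>j\<in>Vset n. lapK r n w i j * p j)"
proof -
  have e: "lapK r n w i j * p j = deg n w i powr (- r) * ((if i = j then deg n w i * p j else 0) - w i j * p j)" for j
    by (simp add: lapK_def algebra_simps)
  have "(\<Sum>j\<in>Vset n. lapK r n w i j * p j)
      = deg n w i powr (- r) * ((\<Sum>j\<in>Vset n. if i = j then deg n w i * p j else 0) - (\<Sum>j\<in>Vset n. w i j * p j))"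
    unfolding e sum_distrib_left[symmetric] sum_subtractf by simp
  also have "\<dots> = lap r n w p i" unfolding lap_alt using i by simp
  finally show ?thesis by simp
qed

lemma lap_diff: "lap r n w (\<lambda>k. q k - p k) i = lap r n w q i - lap r n w p i"
proof -
  have "(\<Sum>j\<in>Vset n. w i j * (q j - p j)) = (\<Sum>j\<in>Vset n. w i j * q j) - (\<Sum>j\<in>Vset n. w i j * p j)"
    by (simp add: right_diff_distrib sum_subtractf)
  show ?thesis unfolding lap_alt \<open>(\<Sum>j\<in>Vset n. w i j * (q j - p j)) = _\<close> by (simp add: algebra_simps)
qed

lemma lap_neg: "lap r n w (\<lambda>k. - p k) i = - lap r n w p i"
proof -
  have "(\<Sum>j\<in>Vset n. w i j * (- p j)) = - (\<Sum>j\<in>Vset n. w i j * p j)"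
    by (simp add: sum_negf)
  show ?thesis unfolding lap_alt \<open>(\<Sum>j\<in>Vset n. w i j * (- p j)) = _\<close> by (simp add: algebra_simps)
qed

lemma mass_diff: "mass r n w (\<lambda>k. q k - p k) = mass r n w q - mass r n w p"
  unfolding mass_def by (simp add: algebra_simps sum_subtractf)

lemma lap_le0:
  assumes G: "is_graph n w" and i: "i \<in> Vset n" and l: "lap r n w p i \<le> 0"
  shows "(\<Sum>j\<in>Vset n. w i j * (p i - p j)) \<le> 0"
proof -
  have "deg n w i powr (- r) > 0" using deg_pos[OF G i] by simp
  with l show ?thesis unfolding lap_def by (simp add: mult_le_0_iff)
qed

lemma exists_max:
  assumes "n \<ge> 1"
  shows "\<exists>i0\<in>Vset n. \<forall>j\<in>Vset n. (p::nat\<Rightarrow>real) j \<le> p i0"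
proof -
  have ne: "p ` Vset n \<noteq> {}" using assms unfolding Vset_def by auto
  have "Max (p ` Vset n) \<in> p ` Vset n" using Max_in[OF _ ne] by simp
  then obtain i0 where "i0 \<in> Vset n" "p i0 = Max (p ` Vset n)" by auto
  then show ?thesis by (metis Max_ge finV finite_imageI imageI)
qed

lemma n_ge1: "is_graph n w \<Longrightarrow> n \<ge> 1" unfolding is_graph_def by auto

lemma harm_constant:
  assumes G: "is_graph n w" and h: "\<And>i. i \<in> Vset n \<Longrightarrow> lap r n w p i = 0"
  shows "\<exists>c. \<forall>j\<in>Vset n. p j = c"
proof -
  obtain i0 where i0: "i0 \<in> Vset n" "\<forall>j\<in>Vset n. p j \<le> p i0"
    using exists_max[OF n_ge1[OF G]] by blast
  have hh: "(\<Sum>j\<in>Vset n. w i j * (p i - p j)) \<le> 0" if "i \<in> Vset n" for i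
    by (rule lap_le0[where r=r, OF G that]) (simp add: h that)
  have "p j = p i0" if "j \<in> Vset n" for j
    by (rule harm_const[OF G i0(1) _ _ that]) (use i0 hh in blast)+
  then show ?thesis by blast
qed

lemma harm_zero_mass:
  assumes G: "is_graph n w" and h: "\<And>i. i \<in> Vset n \<Longrightarrow> lap r n w p i = 0"
    and m: "mass r n w p = 0" and j: "j \<in> Vset n"
  shows "p j = 0"
proof -
  obtain c where c: "\<forall>j\<in>Vset n. p j = c" using harm_constant[OF G h] by blast
  have "mass r n w p = c * vol r n w" unfolding mass_def vol_def
    using c by (simp add: sum_distrib_left mult.commute)
  with m vol_pos[OF G, of r] have "c = 0" by simp
  with c j show ?thesis by simp
qed

lemma dir_le0:
  assumes G: "is_graph n w" and S: "S \<subseteq> Vset n" and j0: "j0 \<in> Vset n - S"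
    and h: "\<And>i. i \<in> S \<Longrightarrow> lap r n w p i = 0"
    and z: "\<And>i. i \<in> Vset n - S \<Longrightarrow> p i = 0" and j: "j \<in> Vset n"
  shows "p j \<le> 0"
proof (rule ccontr)
  assume "\<not> p j \<le> 0"
  obtain i0 where i0: "i0 \<in> Vset n" "\<forall>j\<in>Vset n. p j \<le> p i0"
    using exists_max[OF n_ge1[OF G]] by blast
  have pos: "p i0 > 0" using i0 j \<open>\<not> p j \<le> 0\<close> by force
  have "p j0 = p i0"
  proof (rule harm_const[OF G i0(1)])
    fix i assume i: "i \<in> Vset n" "p i = p i0"
    then have "i \<in> S" using z pos by (metis DiffI less_irrefl)
    show "(\<Sum>j\<in>Vset n. w i j * (p i - p j)) \<le> 0"
      by (rule lap_le0[where r=r, OF G i(1)]) (use h \<open>i \<in> S\<close> in simp)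
  qed (use i0 j0 in auto)
  with z[OF j0] pos show False by simp
qed

lemma dir_zero:
  assumes G: "is_graph n w" and S: "S \<subseteq> Vset n" and j0: "j0 \<in> Vset n - S"
    and h: "\<And>i. i \<in> S \<Longrightarrow> lap r n w p i = 0"
    and z: "\<And>i. i \<in> Vset n - S \<Longrightarrow> p i = 0" and j: "j \<in> Vset n"
  shows "p j = 0"
proof -
  have "p j \<le> 0" by (rule dir_le0[OF G S j0 h z j])
  moreover have "- p j \<le> 0"
    using dir_le0[OF G S j0, of r "\<lambda>k. - p k" j] h z j by (simp add: lap_neg)
  ultimately show ?thesis by simp
qed

lemma sum_minus_avg:
  assumes G: "is_graph n w"
  shows "(\<Sum>i\<in>Vset n. deg n w i powr r * (u i - avg r n w u i)) = 0"
proof -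
  have gen: "(\<Sum>i\<in>A. a i * (f i - c)) = (\<Sum>i\<in>A. a i * f i) - (\<Sum>i\<in>A. a i) * c" for A a f and c :: real
    by (simp add: right_diff_distrib sum_subtractf sum_distrib_right)
  have "(\<Sum>i\<in>Vset n. deg n w i powr r * (u i - avg r n w u i))
     = (\<Sum>i\<in>Vset n. deg n w i powr r * (u i - mass r n w u / vol r n w))"
    by (rule sum.cong) (auto simp: avg_def)
  also have "\<dots> = mass r n w u - vol r n w * (mass r n w u / vol r n w)"
    unfolding gen by (simp add: mass_def vol_def)
  finally show ?thesis using vol_pos[OF G, of r] by simp
qed

lemma phi_exists:
  assumes G: "is_graph n w"
  shows "\<exists>p. onV n p \<and> (\<forall>i\<in>Vset n. lap r n w p i = u i - avg r n w u i) \<and> mass r n w p = 0"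
proof -
  define K where "K i j = lapK r n w i j + deg n w j powr r" for i j
  have KS: "(\<Sum>j\<in>Vset n. K i j * x j) = lap r n w x i + mass r n w x" if "i \<in> Vset n" for i x
    unfolding K_def mass_def using that
    by (simp add: lap_mat algebra_simps sum.distrib)
  have key: "mass r n w x = 0" if "\<And>i. i \<in> Vset n \<Longrightarrow> lap r n w x i + mass r n w x = b i"
    and "(\<Sum>i\<in>Vset n. deg n w i powr r * b i) = 0" for x b
  proof -
    have "0 = (\<Sum>i\<in>Vset n. deg n w i powr r * (lap r n w x i + mass r n w x))"
      using that by simp
    also have "\<dots> = (\<Sum>i\<in>Vset n. deg n w i powr r * lap r n w x i) + vol r n w * mass r n w x"
      unfolding vol_def by (simp add: algebra_simps sum.distrib sum_distrib_right sum_distrib_left)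
    finally show ?thesis using sum_lap[OF G] vol_pos[OF G, of r] by simp
  qed
  have "\<exists>x. (\<forall>i. i \<notin> Vset n \<longrightarrow> x i = 0) \<and> (\<forall>i\<in>Vset n. (\<Sum>j\<in>Vset n. K i j * x j) = u i - avg r n w u i)"
    unfolding Vset_def
  proof (rule inj_imp_solvable)
    fix x i assume h: "\<And>i. i \<in> {1..n} \<Longrightarrow> (\<Sum>j\<in>{1..n}. K i j * x j) = 0" and i: "i \<in> {1..n}"
    have h': "lap r n w x i + mass r n w x = 0" if "i \<in> Vset n" for i
      using h[of i] KS[of i x] that unfolding Vset_def by simp
    have m: "mass r n w x = 0" by (rule key[of x "\<lambda>_. 0"]) (use h' in auto)
    show "x i = 0"
      by (rule harm_zero_mass[OF G _ m]) (use h' m i in \<open>auto simp: Vset_def\<close>)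
  qed
  then obtain x where x: "onV n x" "\<And>i. i \<in> Vset n \<Longrightarrow> lap r n w x i + mass r n w x = u i - avg r n w u i"
    unfolding onV_def using KS by auto
  have m: "mass r n w x = 0"
    using key[of x "\<lambda>i. u i - avg r n w u i"] x(2) sum_minus_avg[OF G] by blast
  show ?thesis using x m by auto
qed

lemma onV_eq:
  assumes G: "is_graph n w" and "onV n p" "onV n q" "\<And>i. i \<in> Vset n \<Longrightarrow> p i = q i"
  shows "p = q"
  using assms unfolding onV_def by (metis ext)

lemma phi_char:
  assumes G: "is_graph n w" and p: "onV n p" "\<And>i. i\<in>Vset n \<Longrightarrow> lap r n w p i = u i - avg r n w u i"
    "mass r n w p = 0"
  shows "phi r n w u = p"
  unfolding phi_def
proof (rule the_equality)
  show "onV n p \<and> (\<forall>i\<in>Vset n. lap r n w p i = u i - avg r n w u i) \<and> mass r n w p = 0" using p by auto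
next
  fix q assume q: "onV n q \<and> (\<forall>i\<in>Vset n. lap r n w q i = u i - avg r n w u i) \<and> mass r n w q = 0"
  have "q i - p i = 0" if "i \<in> Vset n" for i
    by (rule harm_zero_mass[OF G, of r "\<lambda>k. q k - p k"])
      (use q p that in \<open>auto simp: lap_diff mass_diff\<close>)
  then show "q = p" using onV_eq[OF G, of q p] q p by auto
qed

lemma phi_props:
  assumes G: "is_graph n w"
  shows "onV n (phi r n w u)" "\<And>i. i\<in>Vset n \<Longrightarrow> lap r n w (phi r n w u) i = u i - avg r n w u i"
    "mass r n w (phi r n w u) = 0"
proof -
  obtain p where p: "onV n p" "\<forall>i\<in>Vset n. lap r n w p i = u i - avg r n w u i" "mass r n w p = 0"
    using phi_exists[OF G] by blast
  have "phi r n w u = p" by (rule phi_char[OF G]) (use p in auto)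
  then show "onV n (phi r n w u)" "\<And>i. i\<in>Vset n \<Longrightarrow> lap r n w (phi r n w u) i = u i - avg r n w u i"
    "mass r n w (phi r n w u) = 0" using p by auto
qed

lemma eq_exists:
  assumes G: "is_graph n w" and S: "S \<subseteq> Vset n" and j0: "j0 \<in> Vset n - S"
  shows "\<exists>\<nu>. onV n \<nu> \<and> (\<forall>i\<in>S. lap r n w \<nu> i = 1) \<and> (\<forall>i\<in>Vset n - S. \<nu> i = 0)"
proof -
  define K where "K i j = (if i \<in> S then lapK r n w i j else if i = j then 1 else 0)" for i j
  have KS: "(\<Sum>j\<in>Vset n. K i j * x j) = (if i \<in> S then lap r n w x i else x i)" if "i \<in> Vset n" for i x
  proof (cases "i \<in> S")
    case True then show ?thesis by (simp add: K_def lap_mat that)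
  next
    case False
    then have "(\<Sum>j\<in>Vset n. K i j * x j) = (\<Sum>j\<in>Vset n. if i = j then x j else 0)"
      by (intro sum.cong) (auto simp: K_def)
    then show ?thesis using that False by simp
  qed
  have "\<exists>x. (\<forall>i. i \<notin> Vset n \<longrightarrow> x i = 0) \<and> (\<forall>i\<in>Vset n. (\<Sum>j\<in>Vset n. K i j * x j) = (if i \<in> S then 1 else 0))"
    unfolding Vset_def
  proof (rule inj_imp_solvable)
    fix x i assume h: "\<And>i. i \<in> {1..n} \<Longrightarrow> (\<Sum>j\<in>{1..n}. K i j * x j) = 0" and i: "i \<in> {1..n}"
    have h': "(if i \<in> S then lap r n w x i else x i) = 0" if "i \<in> Vset n" for i
      using h[of i] KS[of i x] that unfolding Vset_def by simp
    show "x i = 0"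
    proof (rule dir_zero[where r=r, OF G S j0])
      fix k assume "k \<in> S" then show "lap r n w x k = 0" using h'[of k] S by auto
    next
      fix k assume "k \<in> Vset n - S" then show "x k = 0" using h'[of k] by auto
    qed (use i in \<open>simp add: Vset_def\<close>)
  qed
  then obtain x where x1: "onV n x" and xx: "\<And>i. i \<in> Vset n \<Longrightarrow> (if i \<in> S then lap r n w x i else x i) = (if i \<in> S then 1 else 0)"
    unfolding onV_def using KS by auto
  have a: "lap r n w x i = 1" if "i \<in> S" for i using xx[of i] that S by auto
  have b: "x i = 0" if "i \<in> Vset n - S" for i using xx[of i] that by auto
  show ?thesis using a b x1 by blast
qed

lemma eq_props:
  assumes G: "is_graph n w" and S: "S \<subseteq> Vset n" and j0: "j0 \<in> Vset n - S"
  shows "onV n (eqmeas r n w S)" "\<And>i. i\<in>S \<Longrightarrow> lap r n w (eqmeas r n w S) i = 1"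
    "\<And>i. i \<in> Vset n - S \<Longrightarrow> eqmeas r n w S i = 0"
proof -
  obtain p where p: "onV n p \<and> (\<forall>i\<in>S. lap r n w p i = 1) \<and> (\<forall>i\<in>Vset n - S. p i = 0)"
    using eq_exists[OF G S j0] by blast
  have "eqmeas r n w S = p" unfolding eqmeas_def
  proof (rule the_equality)
    fix q assume q: "onV n q \<and> (\<forall>i\<in>S. lap r n w q i = 1) \<and> (\<forall>i\<in>Vset n - S. q i = 0)"
    have "q i - p i = 0" if "i \<in> Vset n" for i
      by (rule dir_zero[OF G S j0, of r "\<lambda>k. q k - p k"]) (use q p that in \<open>auto simp: lap_diff\<close>)
    then show "q = p" using onV_eq[OF G, of q p] q p by auto
  qed (rule p)
  then show "onV n (eqmeas r n w S)" "\<And>i. i\<in>S \<Longrightarrow> lap r n w (eqmeas r n w S) i = 1"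
    "\<And>i. i \<in> Vset n - S \<Longrightarrow> eqmeas r n w S i = 0" using p by auto
qed



lemma metzler_pos:
  fixes z :: "real \<Rightarrow> nat \<Rightarrow> real" and Q :: "nat \<Rightarrow> nat \<Rightarrow> real"
  assumes A: "finite A"
    and der: "\<And>t i. t \<ge> 0 \<Longrightarrow> i \<in> A \<Longrightarrow> ((\<lambda>s. z s i) has_real_derivative (\<Sum>j\<in>A. Q i j * z t j)) (at t within {0..})"
    and Q: "\<And>i j. i \<in> A \<Longrightarrow> j \<in> A \<Longrightarrow> i \<noteq> j \<Longrightarrow> Q i j \<ge> 0"
    and z0: "\<And>i. i \<in> A \<Longrightarrow> z 0 i \<ge> 0"
    and t: "t \<ge> 0" and i: "i \<in> A"
  shows "z t i \<ge> 0"
proof -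
  define K where "K = 1 + (\<Sum>i\<in>A. \<Sum>j\<in>A. \<bar>Q i j\<bar>)"
  have K: "(\<Sum>j\<in>A. Q i j) < K" if "i \<in> A" for i
  proof -
    have "(\<Sum>j\<in>A. Q i j) \<le> (\<Sum>j\<in>A. \<bar>Q i j\<bar>)" by (rule sum_mono) auto
    also have "\<dots> \<le> (\<Sum>i\<in>A. \<Sum>j\<in>A. \<bar>Q i j\<bar>)"
      by (rule member_le_sum[OF that]) (auto intro: sum_nonneg simp: A)
    finally show ?thesis unfolding K_def by simp
  qed
  have main: "z t i + e * exp (K * t) > 0" if e: "e > 0" and t: "t \<ge> 0" and i: "i \<in> A" for e t i
  proof (rule ccontr)
    assume neg0: "\<not> z t i + e * exp (K * t) > 0"
    define p where "p j s = z s j + e * exp (K * s)" for j s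
    have pder: "((p j) has_real_derivative ((\<Sum>l\<in>A. Q j l * z s l) + e * (exp (K * s) * K))) (at s within {0..})"
      if "s \<ge> 0" "j \<in> A" for s j
      unfolding p_def
      by (rule DERIV_add[OF der[OF that]]) (auto intro!: derivative_eq_intros)
    have pcont: "continuous_on {0..} (p j)" if "j \<in> A" for j
      by (rule DERIV_continuous_on) (use pder that in auto)
    define S where "S = (\<Union>j\<in>A. {s \<in> {0..t}. p j s \<le> (\<lambda>_. 0) s})"
    have cl: "closed {s \<in> {0..t}. p j s \<le> (\<lambda>_. 0) s}" if j: "j \<in> A" for j
    proof (rule continuous_on_closed_Collect_le)
      show "continuous_on {0..t} (p j)" by (rule continuous_on_subset[OF pcont[OF j]]) auto
    qed (auto intro: continuous_on_const)
    have "closed S" unfolding S_def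
      by (rule closed_UN[OF A]) (use cl in blast)
    have "t \<in> S" unfolding S_def p_def using neg0 t i by (auto simp: not_less)
    then have Sne: "S \<noteq> {}" by auto
    have bdd: "bdd_below S" unfolding S_def by (auto intro: bdd_belowI[of _ 0])
    define t1 where "t1 = Inf S"
    have t1S: "t1 \<in> S" unfolding t1_def by (rule closed_contains_Inf[OF Sne bdd \<open>closed S\<close>])
    then obtain i1 where i1: "i1 \<in> A" "p i1 t1 \<le> 0" "0 \<le> t1" "t1 \<le> t" unfolding S_def by auto
    have before: "p j s > 0" if "j \<in> A" "0 \<le> s" "s < t1" for j s
    proof (rule ccontr)
      assume "\<not> p j s > 0"
      then have "s \<in> S" unfolding S_def using that i1 by (auto simp: not_less)
      then have "t1 \<le> s" unfolding t1_def by (rule cInf_lower[OF _ bdd])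
      with that show False by simp
    qed
    have t1pos: "t1 > 0"
    proof (rule ccontr)
      assume "\<not> t1 > 0" then have "t1 = 0" using i1 by simp
      then show False using i1 z0[OF i1(1)] e unfolding p_def by (simp add: add_nonneg_pos)
    qed
    have atnn: "p j t1 \<ge> 0" if j: "j \<in> A" for j
    proof (rule ccontr)
      assume neg: "\<not> p j t1 \<ge> 0"
      have "continuous (at t1 within {0..}) (p j)"
        using pcont[OF j] i1(3) continuous_on_eq_continuous_within by blast
      then obtain d where d: "d > 0" "\<And>s. s \<in> {0..} \<Longrightarrow> dist s t1 < d \<Longrightarrow> dist (p j s) (p j t1) < - p j t1"
        unfolding continuous_within_eps_delta using neg by (metis linorder_not_le neg_0_less_iff_less)
      define s where "s = t1 - min d t1 / 2"
      have s: "0 \<le> s" "s < t1" "dist s t1 < d" using d(1) t1pos unfolding s_def dist_real_def by auto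
      have "dist (p j s) (p j t1) < - p j t1" using d(2)[of s] s by auto
      then have "p j s < 0" unfolding dist_real_def by auto
      with before[OF j s(1,2)] show False by simp
    qed
    have p0: "p i1 t1 = 0" using atnn[OF i1(1)] i1(2) by simp
    define D where "D = (\<Sum>l\<in>A. Q i1 l * z t1 l) + e * (exp (K * t1) * K)"
    have zt: "z t1 l = p l t1 - e * exp (K * t1)" for l unfolding p_def by simp
    have "D = (\<Sum>l\<in>A. Q i1 l * p l t1) + e * exp (K * t1) * (K - (\<Sum>l\<in>A. Q i1 l))"
      unfolding D_def zt by (simp add: algebra_simps sum_subtractf sum_distrib_left sum_distrib_right)
    moreover have "(\<Sum>l\<in>A. Q i1 l * p l t1) \<ge> 0"
    proof (rule sum_nonneg)
      fix l assume l: "l \<in> A"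
      show "Q i1 l * p l t1 \<ge> 0"
      proof (cases "l = i1")
        case True then show ?thesis using p0 by simp
      next
        case False then show ?thesis using Q[OF i1(1) l] atnn[OF l] by simp
      qed
    qed
    moreover have "e * exp (K * t1) * (K - (\<Sum>l\<in>A. Q i1 l)) > 0"
      using K[OF i1(1)] e by simp
    ultimately have Dpos: "D > 0" by linarith
    have "((p i1) has_real_derivative D) (at t1 within {0<..})"
      unfolding D_def by (rule DERIV_subset[OF pder[OF i1(3) i1(1)]]) auto
    then have "((p i1) has_real_derivative D) (at t1)"
      using at_within_open[of t1 "{0<..}"] t1pos by simp
    from DERIV_pos_inc_left[OF this Dpos] obtain d where d: "d > 0" "\<And>h. h > 0 \<Longrightarrow> h < d \<Longrightarrow> p i1 (t1 - h) < p i1 t1"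
      by blast
    define h where "h = min d t1 / 2"
    have h: "h > 0" "h < d" "h < t1" unfolding h_def using d(1) t1pos by auto
    have "p i1 (t1 - h) < 0" using d(2)[OF h(1,2)] p0 by simp
    with before[OF i1(1), of "t1 - h"] h show False by simp
  qed
  show ?thesis
  proof (rule ccontr)
    assume neg: "\<not> z t i \<ge> 0"
    define e where "e = - z t i / (2 * exp (K * t))"
    have e: "e > 0" unfolding e_def using neg by (simp add: divide_neg_pos)
    have "z t i + e * exp (K * t) = z t i / 2" unfolding e_def by (simp add: field_simps)
    with main[OF e t i] neg show False by simp
  qed
qed



lemma lap_avg:
  assumes G: "is_graph n w" shows "lap r n w (avg r n w u) i = 0"
proof -
  have "w i l * (avg r n w u i - avg r n w u l) = 0" if "l \<in> Vset n" for l
  proof (cases "w i l = 0")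
    case False then have "i \<in> Vset n" using w_out[OF G] by blast
    then show ?thesis using that by (simp add: avg_def)
  qed simp
  then have "(\<Sum>l\<in>Vset n. w i l * (avg r n w u i - avg r n w u l)) = 0" by (rule sum.neutral[OF ballI])
  then show ?thesis unfolding lap_def by simp
qed

lemma fj_eq: "fj r n w j = (\<lambda>k. eqmeas r n w (Vset n - {j}) k - avg r n w (eqmeas r n w (Vset n - {j})) k)"
  unfolding fj_def by (rule ext) simp

lemma lap_fj:
  assumes G: "is_graph n w" and j: "j \<in> Vset n" and i: "i \<in> Vset n"
  shows "lap r n w (fj r n w j) i = (if i = j then 1 - vol r n w / deg n w j powr r else 1)"
proof -
  define \<nu> where "\<nu> = eqmeas r n w (Vset n - {j})"
  have S: "Vset n - {j} \<subseteq> Vset n" "j \<in> Vset n - (Vset n - {j})" using j by auto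
  note ep = eq_props[where r=r, OF G S, folded \<nu>_def]
  have l: "lap r n w (fj r n w j) k = lap r n w \<nu> k" for k
    unfolding fj_eq \<nu>_def[symmetric] lap_diff lap_avg[OF G] by simp
  have dj: "deg n w j powr r > 0" using deg_pos[OF G j] by simp
  have "lap r n w \<nu> j = 1 - vol r n w / deg n w j powr r"
  proof -
    have "0 = (\<Sum>i\<in>Vset n. deg n w i powr r * lap r n w \<nu> i)" using sum_lap[OF G] by simp
    also have "\<dots> = deg n w j powr r * lap r n w \<nu> j + (\<Sum>i\<in>Vset n - {j}. deg n w i powr r * lap r n w \<nu> i)"
      using j by (simp add: sum.remove)
    also have "(\<Sum>i\<in>Vset n - {j}. deg n w i powr r * lap r n w \<nu> i) = (\<Sum>i\<in>Vset n - {j}. deg n w i powr r)"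
      using ep(2) by simp
    also have "\<dots> = vol r n w - deg n w j powr r"
      unfolding vol_def using j by (simp add: sum.remove)
    finally have "deg n w j powr r * lap r n w \<nu> j = deg n w j powr r - vol r n w" by simp
    then show ?thesis using dj by (simp add: field_simps)
  qed
  then show ?thesis using ep(2)[of i] i unfolding l by auto
qed

lemma mass_fj:
  assumes G: "is_graph n w" shows "mass r n w (fj r n w j) = 0"
  unfolding mass_def fj_def using sum_minus_avg[OF G] by simp

lemma onV_fj:
  assumes G: "is_graph n w" and j: "j \<in> Vset n" and i: "i \<notin> Vset n"
  shows "fj r n w j i = 0"
proof -
  have S: "Vset n - {j} \<subseteq> Vset n" "j \<in> Vset n - (Vset n - {j})" using j by auto
  show ?thesis using eq_props(1)[where r=r, OF G S] i unfolding fj_def onV_def avg_def by simp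
qed

lemma lap_sum:
  assumes i: "i \<in> Vset n"
  shows "lap r n w (\<lambda>k. \<Sum>j\<in>Vset n. c j * g j k) i = (\<Sum>j\<in>Vset n. c j * lap r n w (g j) i)"
proof -
  have "lap r n w (\<lambda>k. \<Sum>j\<in>Vset n. c j * g j k) i = (\<Sum>l\<in>Vset n. \<Sum>j\<in>Vset n. lapK r n w i l * (c j * g j l))"
    unfolding lap_mat[OF i] by (simp add: sum_distrib_left)
  also have "\<dots> = (\<Sum>j\<in>Vset n. \<Sum>l\<in>Vset n. lapK r n w i l * (c j * g j l))" by (rule sum.swap)
  also have "\<dots> = (\<Sum>j\<in>Vset n. c j * lap r n w (g j) i)"
    unfolding lap_mat[OF i] by (simp add: sum_distrib_left algebra_simps)
  finally show ?thesis .
qed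

lemma mass_sum:
  "mass r n w (\<lambda>k. \<Sum>j\<in>Vset n. c j * g j k) = (\<Sum>j\<in>Vset n. c j * mass r n w (g j))"
proof -
  have "mass r n w (\<lambda>k. \<Sum>j\<in>Vset n. c j * g j k) = (\<Sum>l\<in>Vset n. \<Sum>j\<in>Vset n. deg n w l powr r * (c j * g j l))"
    unfolding mass_def by (simp add: sum_distrib_left)
  also have "\<dots> = (\<Sum>j\<in>Vset n. \<Sum>l\<in>Vset n. deg n w l powr r * (c j * g j l))" by (rule sum.swap)
  also have "\<dots> = (\<Sum>j\<in>Vset n. c j * mass r n w (g j))"
    unfolding mass_def by (simp add: sum_distrib_left algebra_simps)
  finally show ?thesis .
qed

lemma phi_lin:
  assumes G: "is_graph n w"
  shows "phi r n w x = (\<lambda>i. \<Sum>j\<in>Vset n. (- (deg n w j powr r / vol r n w) * x j) * fj r n w j i)"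
proof (rule phi_char[OF G])
  show "onV n (\<lambda>i. \<Sum>j\<in>Vset n. (- (deg n w j powr r / vol r n w) * x j) * fj r n w j i)"
    unfolding onV_def using onV_fj[OF G] by simp
  show "mass r n w (\<lambda>i. \<Sum>j\<in>Vset n. (- (deg n w j powr r / vol r n w) * x j) * fj r n w j i) = 0"
    unfolding mass_sum using mass_fj[OF G] by simp
  fix i assume i: "i \<in> Vset n"
  have vp: "vol r n w > 0" using vol_pos[OF G] by simp
  have t: "(- (deg n w j powr r / vol r n w) * x j) * lap r n w (fj r n w j) i
      = (if i = j then x j else 0) - deg n w j powr r * x j / vol r n w" if j: "j \<in> Vset n" for j
  proof -
    have dj: "deg n w j powr r > 0" using deg_pos[OF G j] by simp
    show ?thesis unfolding lap_fj[OF G j i] using dj vp by (auto simp: field_simps)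
  qed
  have "lap r n w (\<lambda>i. \<Sum>j\<in>Vset n. (- (deg n w j powr r / vol r n w) * x j) * fj r n w j i) i
     = (\<Sum>j\<in>Vset n. (if i = j then x j else 0) - deg n w j powr r * x j / vol r n w)"
    unfolding lap_sum[OF i] by (rule sum.cong[OF refl]) (rule t)
  also have "\<dots> = x i - mass r n w x / vol r n w"
    unfolding sum_subtractf mass_def using i by (simp add: sum_divide_distrib)
  also have "\<dots> = x i - avg r n w x i" using i by (simp add: avg_def)
  finally show "lap r n w (\<lambda>i. \<Sum>j\<in>Vset n. (- (deg n w j powr r / vol r n w) * x j) * fj r n w j i) i
     = x i - avg r n w x i" .
qed

definition Qm :: "real \<Rightarrow> real \<Rightarrow> nat \<Rightarrow> (nat \<Rightarrow> nat \<Rightarrow> real) \<Rightarrow> nat \<Rightarrow> nat \<Rightarrow> real" where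
  "Qm r \<gamma> n w i j = - lapK r n w i j + \<gamma> * deg n w j powr r / vol r n w * fj r n w j i"

lemma Lop_lin:
  assumes G: "is_graph n w" and i: "i \<in> Vset n"
  shows "- Lop r \<gamma> n w x i = (\<Sum>j\<in>Vset n. Qm r \<gamma> n w i j * x j)"
proof -
  define a where "a j = \<gamma> * deg n w j powr r / vol r n w * fj r n w j i * x j" for j
  have 1: "(\<Sum>j\<in>Vset n. Qm r \<gamma> n w i j * x j) = (\<Sum>j\<in>Vset n. a j) - (\<Sum>j\<in>Vset n. lapK r n w i j * x j)"
    unfolding sum_subtractf[symmetric] by (rule sum.cong) (auto simp: Qm_def a_def algebra_simps)
  have 2: "\<gamma> * phi r n w x i = - (\<Sum>j\<in>Vset n. a j)"
    unfolding phi_lin[OF G] a_def sum_distrib_left sum_negf[symmetric]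
    by (rule sum.cong) (auto simp: algebra_simps)
  show ?thesis unfolding Lop_def 1 2 lap_mat[OF i] by simp
qed

lemma Qm_nonneg:
  assumes G: "Cgamma r \<gamma> n w" and g: "\<gamma> \<ge> 0" and i: "i \<in> Vset n" and j: "j \<in> Vset n" and ij: "i \<noteq> j"
  shows "Qm r \<gamma> n w i j \<ge> 0"
proof -
  have Gr: "is_graph n w" using G unfolding Cgamma_def C0_def by (auto split: if_splits)
  have q: "Qm r \<gamma> n w i j = deg n w i powr (- r) * w i j + \<gamma> * deg n w j powr r / vol r n w * fj r n w j i"
    unfolding Qm_def lapK_def using ij by simp
  have a: "deg n w i powr (- r) * w i j \<ge> 0" using w_nonneg[OF Gr] by simp
  show ?thesis
  proof (cases "\<gamma> = 0")
    case True then show ?thesis using q a by simp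
  next
    case False
    then have C: "C0 r n w" and c2: "w i j = 0 \<or> deg n w i powr (- r) * w i j + \<gamma> * deg n w j powr r / vol r n w * fj r n w j i > 0"
      using G i j ij unfolding Cgamma_def by auto
    show ?thesis
    proof (cases "w i j = 0")
      case True
      have "i \<noteq> j \<longrightarrow> 0 < w i j \<or> 0 \<le> fj r n w j i" using C i j unfolding C0_def by blast
      then have "fj r n w j i \<ge> 0" using True ij by simp
      moreover have "\<gamma> * deg n w j powr r / vol r n w \<ge> 0" using g vol_pos[OF Gr, of r] by simp
      ultimately have "\<gamma> * deg n w j powr r / vol r n w * fj r n w j i \<ge> 0" by (rule mult_nonneg_nonneg[rotated])
      then show ?thesis using q True by simp
    next
      case False then show ?thesis using c2 q by simp
    qed
  qed
qed

theorem lemma6p27: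
  fixes r \<gamma> :: real and n :: nat and w :: "nat \<Rightarrow> nat \<Rightarrow> real"
    and u v :: "real \<Rightarrow> nat \<Rightarrow> real" and u0 v0 :: "nat \<Rightarrow> real"
  assumes r: "0 \<le> r" "r \<le> 1"
    and g: "\<gamma> \<ge> 0"
    and G: "Cgamma r \<gamma> n w"
    and u_ode: "\<And>t i. t \<ge> 0 \<Longrightarrow> i \<in> Vset n \<Longrightarrow>
        ((\<lambda>s. u s i) has_real_derivative (- Lop r \<gamma> n w (u t) i)) (at t within {0..})"
    and u_C1: "\<And>i. i \<in> Vset n \<Longrightarrow> continuous_on {0..} (\<lambda>t. - Lop r \<gamma> n w (u t) i)"
    and u_init: "\<And>i. i \<in> Vset n \<Longrightarrow> u 0 i = u0 i"
    and v_ode: "\<And>t i. t \<ge> 0 \<Longrightarrow> i \<in> Vset n \<Longrightarrow>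
        ((\<lambda>s. v s i) has_real_derivative (- Lop r \<gamma> n w (v t) i)) (at t within {0..})"
    and v_C1: "\<And>i. i \<in> Vset n \<Longrightarrow> continuous_on {0..} (\<lambda>t. - Lop r \<gamma> n w (v t) i)"
    and v_init: "\<And>i. i \<in> Vset n \<Longrightarrow> v 0 i = v0 i"
    and le0: "\<And>i. i \<in> Vset n \<Longrightarrow> u0 i \<le> v0 i"
  shows "\<forall>t\<ge>0. \<forall>i\<in>Vset n. u t i \<le> v t i"
  proof -
  have Gr: "is_graph n w" using G unfolding Cgamma_def C0_def by (auto split: if_splits)
  define z where "z s k = v s k - u s k" for s k
  have der: "((\<lambda>s. z s k) has_real_derivative (\<Sum>j\<in>Vset n. Qm r \<gamma> n w k j * z t j)) (at t within {0..})"
    if t: "t \<ge> 0" and k: "k \<in> Vset n" for t :: real and k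
  proof -
    have "((\<lambda>s. v s k - u s k) has_real_derivative (- Lop r \<gamma> n w (v t) k - - Lop r \<gamma> n w (u t) k)) (at t within {0..})"
      by (rule DERIV_diff[OF v_ode[OF t k] u_ode[OF t k]])
    moreover have "- Lop r \<gamma> n w (v t) k - - Lop r \<gamma> n w (u t) k = (\<Sum>j\<in>Vset n. Qm r \<gamma> n w k j * z t j)"
      unfolding Lop_lin[OF Gr k] z_def by (simp add: algebra_simps sum_subtractf)
    ultimately show ?thesis by (simp add: z_def)
  qed
  show ?thesis
  proof (intro allI impI ballI)
    fix t :: real and i assume t: "t \<ge> 0" and i: "i \<in> Vset n"
    have "z t i \<ge> 0"
    proof (rule metzler_pos[of "Vset n" z "Qm r \<gamma> n w"])
      show "\<And>i j. i \<in> Vset n \<Longrightarrow> j \<in> Vset n \<Longrightarrow> i \<noteq> j \<Longrightarrow> Qm r \<gamma> n w i j \<ge> 0"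
        by (rule Qm_nonneg[OF G g])
      show "\<And>i. i \<in> Vset n \<Longrightarrow> z 0 i \<ge> 0" using u_init v_init le0 by (simp add: z_def)
    qed (use der t i in auto)
    then show "u t i \<le> v t i" by (simp add: z_def)
  qed
qed

end
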